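(* Let $K\subset\mathbb{R}^n$ be a closed convex set with diameter $d$ and $\sigma>0$. Then $\varepsilon^*\gtrsim\sigma\wedge d$.
   Context: $M(\eta,T)$ is the maximal cardinality of a subset of $T$ with pairwise Euclidean distances $>\eta$; the local entropy is $\log M^{\mathrm{loc}}(\varepsilon)$ with $M^{\mathrm{loc}}(\varepsilon)=\sup_{\theta\in K}M(\varepsilon/c^*,B(\theta,\varepsilon)\cap K)$, where $B$ is the closed Euclidean ball and $c^*$ is a sufficiently large absolute constant. $\varepsilon^*=\sup\{\varepsilon:\varepsilon^2/\sigma^2\le\log M^{\mathrm{loc}}(\varepsilon)\}$ (its square is up to constants the minimax risk for estimating $\mu\in K$ from $Y=\mu+\xi$, $\xi\sim N(0,\sigma^2\mathbb{I}_n)$). $\gtrsim$ hides an absolute constant. *)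

theory Defs
  imports "HOL-Analysis.Analysis"
begin

text \<open>Points of R^n are represented as functions nat => real vanishing outside {..<n},
  so that the dimension n can be quantified inside the statement (the constant in the
  theorem must be independent of n).\<close>

definition Rn :: "nat \<Rightarrow> (nat \<Rightarrow> real) set" where
  "Rn n = {x. \<forall>i\<ge>n. x i = 0}"

definition edist :: "nat \<Rightarrow> (nat \<Rightarrow> real) \<Rightarrow> (nat \<Rightarrow> real) \<Rightarrow> real" where
  "edist n x y = sqrt (\<Sum>i<n. (x i - y i)^2)"

definition ecball :: "nat \<Rightarrow> (nat \<Rightarrow> real) \<Rightarrow> real \<Rightarrow> (nat \<Rightarrow> real) set" where
  "ecball n \<theta> r = {x \<in> Rn n. edist n \<theta> x \<le> r}"

definition convex_Rn :: "(nat \<Rightarrow> real) set \<Rightarrow> bool" where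
  "convex_Rn K \<longleftrightarrow> (\<forall>x\<in>K. \<forall>y\<in>K. \<forall>u::real. 0 \<le> u \<and> u \<le> 1 \<longrightarrow> (\<lambda>i. u * x i + (1 - u) * y i) \<in> K)"

definition closed_Rn :: "nat \<Rightarrow> (nat \<Rightarrow> real) set \<Rightarrow> bool" where
  "closed_Rn n K \<longleftrightarrow> (\<forall>X x. (\<forall>k. X k \<in> K) \<and> x \<in> Rn n \<and> (\<lambda>k. edist n (X k) x) \<longlonglongrightarrow> 0 \<longrightarrow> x \<in> K)"

definition bounded_Rn :: "nat \<Rightarrow> (nat \<Rightarrow> real) set \<Rightarrow> bool" where
  "bounded_Rn n K \<longleftrightarrow> (\<exists>B. \<forall>x\<in>K. \<forall>y\<in>K. edist n x y \<le> B)"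

definition diam_Rn :: "nat \<Rightarrow> (nat \<Rightarrow> real) set \<Rightarrow> real" where
  "diam_Rn n K = Sup {edist n x y | x y. x \<in> K \<and> y \<in> K}"

definition packing_number :: "nat \<Rightarrow> real \<Rightarrow> (nat \<Rightarrow> real) set \<Rightarrow> nat" where
  "packing_number n \<eta> T = Sup {card S | S. S \<subseteq> T \<and> finite S \<and>
      (\<forall>x\<in>S. \<forall>y\<in>S. x \<noteq> y \<longrightarrow> edist n x y > \<eta>)}"

definition Mloc :: "nat \<Rightarrow> real \<Rightarrow> (nat \<Rightarrow> real) set \<Rightarrow> real \<Rightarrow> real" where
  "Mloc n cstar K \<epsilon> = (SUP \<theta>\<in>K. real (packing_number n (\<epsilon> / cstar) (ecball n \<theta> \<epsilon> \<inter> K)))"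

definition eps_star :: "nat \<Rightarrow> real \<Rightarrow> real \<Rightarrow> (nat \<Rightarrow> real) set \<Rightarrow> real" where
  "eps_star n cstar \<sigma> K = Sup {\<epsilon>. 0 \<le> \<epsilon> \<and> \<epsilon>^2 / \<sigma>^2 \<le> ln (Mloc n cstar K \<epsilon>)}"

end

theory Submission
  imports Defs
begin

lemma edist_nonneg: "0 \<le> edist n x y"
  unfolding edist_def by (simp add: sum_nonneg)

lemma edist_self: "edist n x x = 0"
  unfolding edist_def by simp

lemma edist_sym: "edist n x y = edist n y x"
  unfolding edist_def by (simp add: power2_commute)

lemma coord_le: "i < n \<Longrightarrow> \<bar>x i - y i\<bar> \<le> edist n x y"
proof -
  assume i: "i < n"
  have "(x i - y i)^2 \<le> (\<Sum>j<n. (x j - y j)^2)"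
    by (rule member_le_sum) (use i in auto)
  then show ?thesis unfolding edist_def
    by (metis real_sqrt_abs real_sqrt_le_mono)
qed

lemma edist_scale:
  "edist n x (\<lambda>i. u * y i + (1 - u) * x i) = \<bar>u\<bar> * edist n x y"
proof -
  have "(\<Sum>i<n. (x i - (u * y i + (1 - u) * x i))^2) = u^2 * (\<Sum>i<n. (x i - y i)^2)"
    by (simp add: sum_distrib_left power2_eq_square algebra_simps)
  then show ?thesis unfolding edist_def by (simp add: real_sqrt_mult)
qed

lemma floor_eq_close:
  fixes a b :: real
  assumes "floor a = floor b" shows "\<bar>a - b\<bar> < 1"
proof -
  have "of_int (floor a) \<le> a" "a < of_int (floor a) + 1"
       "of_int (floor b) \<le> b" "b < of_int (floor b) + 1"
    by linarith+
  then show ?thesis using assms by (simp add: abs_less_iff) linarith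
qed

lemma pack_card_bound:
  assumes B: "\<forall>x\<in>K. \<forall>y\<in>K. edist n x y \<le> B" and eta: "\<eta> > 0"
  shows "\<exists>P::nat. \<forall>S. S \<subseteq> K \<and> finite S \<and> (\<forall>x\<in>S. \<forall>y\<in>S. x \<noteq> y \<longrightarrow> edist n x y > \<eta>)
           \<longrightarrow> card S \<le> P"
proof (cases "K = {}")
  case True
  then show ?thesis by (intro exI[of _ 0]) auto
next
  case False
  then obtain a where a: "a \<in> K" by auto
  define s where "s = \<eta> / sqrt (real n + 1)"
  have sqpos: "sqrt (real n + 1) > 0" by simp
  have s: "s > 0" unfolding s_def using eta by simp
  have s2: "s^2 = \<eta>^2 / (real n + 1)"
    unfolding s_def by (simp add: power_divide)
  define N where "N = ceiling (B / s)"
  define L where "L = {xs::int list. set xs \<subseteq> {-N..N} \<and> length xs = n}"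
  have finL: "finite L" unfolding L_def
    by (rule finite_lists_length_eq) simp
  define g where "g x = map (\<lambda>i. floor ((x i - a i) / s)) [0..<n]" for x :: "nat \<Rightarrow> real"
  show ?thesis
  proof (intro exI[of _ "card L"] allI impI)
    fix S assume S: "S \<subseteq> K \<and> finite S \<and> (\<forall>x\<in>S. \<forall>y\<in>S. x \<noteq> y \<longrightarrow> edist n x y > \<eta>)"
    have inj: "inj_on g S"
    proof (rule inj_onI, rule ccontr)
      fix x y assume x: "x \<in> S" and y: "y \<in> S" and gxy: "g x = g y" and ne: "x \<noteq> y"
      have eq: "\<forall>i<n. floor ((x i - a i) / s) = floor ((y i - a i) / s)"
        using gxy unfolding g_def by (simp add: map_eq_conv)
      have co: "(x i - y i)^2 \<le> s^2" if i: "i < n" for i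
      proof -
        have "\<bar>(x i - a i) / s - (y i - a i) / s\<bar> < 1"
          using floor_eq_close eq i by blast
        also have "(x i - a i) / s - (y i - a i) / s = (x i - y i) / s"
          by (simp add: diff_divide_distrib)
        finally have "\<bar>x i - y i\<bar> < s" using s by (simp add: abs_divide)
        then have "\<bar>x i - y i\<bar> \<le> \<bar>s\<bar>" by simp
        then show ?thesis by (simp add: abs_le_square_iff)
      qed
      have "(\<Sum>i<n. (x i - y i)^2) \<le> real (card {..<n}) * s^2"
        by (rule sum_bounded_above) (use co in auto)
      also have "\<dots> = real n * \<eta>^2 / (real n + 1)" using s2 by simp
      also have "\<dots> < \<eta>^2" using eta by (simp add: field_simps)
      finally have "edist n x y < sqrt (\<eta>^2)" unfolding edist_def
        by (rule real_sqrt_less_mono)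
      then have "edist n x y < \<eta>" using eta by simp
      then show False using S x y ne by force
    qed
    have sub: "g ` S \<subseteq> L"
    proof
      fix v assume "v \<in> g ` S"
      then obtain x where x: "x \<in> S" and v: "v = g x" by auto
      have xK: "x \<in> K" using S x by auto
      have "floor ((x i - a i) / s) \<in> {-N..N}" if i: "i < n" for i
      proof -
        have "\<bar>x i - a i\<bar> \<le> B" using coord_le[OF i, of x a] B xK a by force
        then have t: "\<bar>(x i - a i) / s\<bar> \<le> B / s" using s
          by (simp add: abs_divide divide_right_mono)
        have "B / s \<le> of_int N" unfolding N_def by simp
        then have "(x i - a i) / s \<le> of_int N" "- of_int N \<le> (x i - a i) / s" using t by linarith+
        then show ?thesis by (simp add: floor_le_iff le_floor_iff)
      qed
      then show "v \<in> L" unfolding v g_def L_def by auto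
    qed
    have "card S = card (g ` S)" using inj by (simp add: card_image)
    also have "\<dots> \<le> card L" using sub finL by (rule card_mono[rotated])
    finally show "card S \<le> card L" .
  qed
qed


lemma pack_upper:
  assumes "\<And>S. S \<subseteq> T \<and> finite S \<and> (\<forall>x\<in>S. \<forall>y\<in>S. x \<noteq> y \<longrightarrow> edist n x y > \<eta>) \<Longrightarrow> card S \<le> P"
  shows "packing_number n \<eta> T \<le> P"
  unfolding packing_number_def
  by (rule cSup_least) (use assms in \<open>auto intro: exI[of _ "{}"]\<close>)

lemma pack_lower:
  assumes "\<And>S. S \<subseteq> T \<and> finite S \<and> (\<forall>x\<in>S. \<forall>y\<in>S. x \<noteq> y \<longrightarrow> edist n x y > \<eta>) \<Longrightarrow> card S \<le> P"
    and "S \<subseteq> T" "finite S" "\<forall>x\<in>S. \<forall>y\<in>S. x \<noteq> y \<longrightarrow> edist n x y > \<eta>"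
  shows "card S \<le> packing_number n \<eta> T"
  unfolding packing_number_def
proof (rule cSup_upper)
  show "bdd_above {card S |S. S \<subseteq> T \<and> finite S \<and> (\<forall>x\<in>S. \<forall>y\<in>S. x \<noteq> y \<longrightarrow> \<eta> < edist n x y)}"
    unfolding bdd_above_def using assms(1) by blast
qed (use assms in auto)

lemma ln2_ge: "1/4 \<le> ln (2::real)"
proof -
  have "norm (exp (1/4::real)) \<le> 1 + 2 * norm (1/4::real)"
    by (rule exp_bound_lemma) simp
  then have "exp (1/4::real) \<le> 2" by simp
  then show ?thesis by (subst ln_ge_iff) auto
qed


lemma ecball0: "\<theta> \<in> Rn n \<Longrightarrow> x \<in> ecball n \<theta> 0 \<Longrightarrow> x = \<theta>"
proof -
  assume t: "\<theta> \<in> Rn n" and x: "x \<in> ecball n \<theta> 0"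
  have xR: "x \<in> Rn n" and e: "edist n \<theta> x \<le> 0" using x unfolding ecball_def by auto
  then have "edist n \<theta> x = 0" using edist_nonneg[of n \<theta> x] by linarith
  then have "(\<Sum>i<n. (\<theta> i - x i)^2) = 0" unfolding edist_def by simp
  then have "\<forall>i\<in>{..<n}. (\<theta> i - x i)^2 = 0"
    by (subst sum_nonneg_eq_0_iff[symmetric]) auto
  then have "\<forall>i<n. x i = \<theta> i" by auto
  moreover have "\<forall>i\<ge>n. x i = \<theta> i" using t xR unfolding Rn_def by auto
  ultimately show "x = \<theta>" by (metis not_le ext)
qed

lemma main_aux:
  fixes cstar :: real and n :: nat and K :: "(nat \<Rightarrow> real) set" and \<sigma> :: real
  assumes cs: "cstar \<ge> 2"
    and A: "K \<subseteq> Rn n \<and> K \<noteq> {} \<and> convex_Rn K \<and> closed_Rn n K \<and> bounded_Rn n K \<and> \<sigma> > 0"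
  shows "1/2 * min \<sigma> (diam_Rn n K) \<le> eps_star n cstar \<sigma> K"
proof -
    from A have KR: "K \<subseteq> Rn n" and Kne: "K \<noteq> {}" and conv: "convex_Rn K"
      and bnd: "bounded_Rn n K" and sig: "\<sigma> > 0" by auto
    obtain B where B: "\<forall>x\<in>K. \<forall>y\<in>K. edist n x y \<le> B" using bnd unfolding bounded_Rn_def by auto
    obtain a where a: "a \<in> K" using Kne by auto
    have B0: "0 \<le> B" using B a edist_self[of n a] by force
    define E where "E = {\<epsilon>. 0 \<le> \<epsilon> \<and> \<epsilon>^2 / \<sigma>^2 \<le> ln (Mloc n cstar K \<epsilon>)}"
    have EE: "eps_star n cstar \<sigma> K = Sup E" unfolding eps_star_def E_def by simp
    have Ebdd: "bdd_above E"
    proof -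
      have "\<epsilon> \<le> cstar * B" if e: "\<epsilon> \<in> E" for \<epsilon>
      proof (rule ccontr)
        assume "\<not> \<epsilon> \<le> cstar * B"
        then have big: "\<epsilon> > cstar * B" by simp
        have cpos: "cstar > 0" using cs by simp
        have "cstar * B \<ge> 0" using cpos B0 by simp
        then have epos: "\<epsilon> > 0" using big by linarith
        have etaB: "\<epsilon> / cstar > B" using big cpos by (simp add: field_simps)
        have p1: "packing_number n (\<epsilon> / cstar) (ecball n \<theta> \<epsilon> \<inter> K) = 1" if t: "\<theta> \<in> K" for \<theta>
        proof (rule antisym)
          have up: "card S \<le> 1" if "S \<subseteq> ecball n \<theta> \<epsilon> \<inter> K \<and> finite S \<and>
              (\<forall>x\<in>S. \<forall>y\<in>S. x \<noteq> y \<longrightarrow> edist n x y > \<epsilon> / cstar)" for S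
          proof -
            have "\<forall>x\<in>S. \<forall>y\<in>S. x = y"
            proof (intro ballI, rule ccontr)
              fix x y assume xy: "x \<in> S" "y \<in> S" "x \<noteq> y"
              then have "edist n x y > \<epsilon> / cstar" using that by blast
              moreover have "x \<in> K" "y \<in> K" using xy that by auto
              then have "edist n x y \<le> B" using B by blast
              ultimately show False using etaB by linarith
            qed
            then show ?thesis using that card_le_Suc0_iff_eq[of S] by simp
          qed
          show "packing_number n (\<epsilon> / cstar) (ecball n \<theta> \<epsilon> \<inter> K) \<le> 1"
            by (rule pack_upper[OF up])
          have "\<theta> \<in> ecball n \<theta> \<epsilon>" using t KR epos unfolding ecball_def by (auto simp: edist_self)
          have tb: "\<theta> \<in> ecball n \<theta> \<epsilon>" by fact
          have "card {\<theta>} \<le> packing_number n (\<epsilon> / cstar) (ecball n \<theta> \<epsilon> \<inter> K)"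
            by (rule pack_lower[where P=1, OF up]) (simp_all add: t tb)
          then show "1 \<le> packing_number n (\<epsilon> / cstar) (ecball n \<theta> \<epsilon> \<inter> K)" by simp
        qed
        have "Mloc n cstar K \<epsilon> = 1" unfolding Mloc_def using p1 Kne by simp
        then have "\<epsilon>^2 / \<sigma>^2 \<le> 0" using e unfolding E_def by simp
        moreover have "\<epsilon>^2 / \<sigma>^2 > 0" using epos sig by simp
        ultimately show False by simp
      qed
      then show ?thesis unfolding bdd_above_def by blast
    qed
    define D where "D = {edist n x y | x y. x \<in> K \<and> y \<in> K}"
    have dD: "diam_Rn n K = Sup D" unfolding diam_Rn_def D_def by simp
    have Dbdd: "bdd_above D" unfolding D_def bdd_above_def using B by blast
    have aD: "edist n a a \<in> D" unfolding D_def using a by blast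
    have d0: "0 \<le> Sup D" using cSup_upper[OF aD Dbdd] by (simp add: edist_self)
    show "1/2 * min \<sigma> (diam_Rn n K) \<le> eps_star n cstar \<sigma> K"
    proof (cases "min \<sigma> (diam_Rn n K) = 0")
      case True
      have p1: "packing_number n (0 / cstar) (ecball n \<theta> 0 \<inter> K) = 1" if t: "\<theta> \<in> K" for \<theta>
      proof (rule antisym)
        have up: "card S \<le> 1" if "S \<subseteq> ecball n \<theta> 0 \<inter> K \<and> finite S \<and>
            (\<forall>x\<in>S. \<forall>y\<in>S. x \<noteq> y \<longrightarrow> edist n x y > 0 / cstar)" for S
        proof -
          have "S \<subseteq> {\<theta>}" using that ecball0[of \<theta> n] t KR by blast
          then show ?thesis using card_mono[of "{\<theta>}" S] by simp
        qed
        show "packing_number n (0 / cstar) (ecball n \<theta> 0 \<inter> K) \<le> 1"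
          by (rule pack_upper[OF up])
        have "\<theta> \<in> ecball n \<theta> 0" using t KR unfolding ecball_def by (auto simp: edist_self)
        have tb: "\<theta> \<in> ecball n \<theta> 0" by fact
          have "card {\<theta>} \<le> packing_number n (0 / cstar) (ecball n \<theta> 0 \<inter> K)"
          by (rule pack_lower[where P=1, OF up]) (simp_all add: t tb)
        then show "1 \<le> packing_number n (0 / cstar) (ecball n \<theta> 0 \<inter> K)" by simp
      qed
      have "Mloc n cstar K 0 = 1" unfolding Mloc_def using p1 Kne by simp
      then have "0 \<in> E" unfolding E_def by simp
      then have "0 \<le> Sup E" using Ebdd by (rule cSup_upper)
      then show ?thesis using True EE by simp
    next
      case False
      define m where "m = min \<sigma> (diam_Rn n K)"
      have mpos: "m > 0" using False d0 dD sig unfolding m_def by linarith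
      define eps where "eps = m / 2"
      have epos: "eps > 0" using mpos unfolding eps_def by simp
      have "Sup D / 2 < Sup D" using mpos dD unfolding m_def by linarith
      then obtain r where "r \<in> D" "Sup D / 2 < r"
        using less_cSup_iff[of D] Dbdd aD by blast
      then obtain x y where x: "x \<in> K" and y: "y \<in> K" and r: "r = edist n x y" and rbig: "Sup D / 2 < r"
        unfolding D_def by blast
      have er: "eps < r" using rbig dD unfolding eps_def m_def by linarith
      have rpos: "r > 0" using er epos by linarith
      define u where "u = eps / r"
      have u0: "0 \<le> u" and u1: "u \<le> 1" unfolding u_def using epos er rpos by auto
      define z where "z = (\<lambda>i. u * y i + (1 - u) * x i)"
      have cv: "\<forall>x\<in>K. \<forall>y\<in>K. \<forall>u::real. 0 \<le> u \<and> u \<le> 1 \<longrightarrow> (\<lambda>i. u * x i + (1 - u) * y i) \<in> K"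
        using conv unfolding convex_Rn_def .
      have zK: "z \<in> K" unfolding z_def using cv[rule_format, OF y x] u0 u1 by simp
      have exz: "edist n x z = eps" unfolding z_def edist_scale using u0 r rpos u_def epos by simp
      have cpos: "cstar > 1" using cs by simp
      define \<eta> where "\<eta> = eps / cstar"
      have etapos: "\<eta> > 0" unfolding \<eta>_def using epos cpos by simp
      have etalt: "\<eta> < eps" unfolding \<eta>_def using epos cpos by (simp add: field_simps)
      obtain P where P: "\<forall>S. S \<subseteq> K \<and> finite S \<and> (\<forall>x\<in>S. \<forall>y\<in>S. x \<noteq> y \<longrightarrow> edist n x y > \<eta>)
           \<longrightarrow> card S \<le> P" using pack_card_bound[OF B etapos] by blast
      have upP: "card S \<le> P" if "S \<subseteq> ecball n \<theta> eps \<inter> K \<and> finite S \<and>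
          (\<forall>x\<in>S. \<forall>y\<in>S. x \<noteq> y \<longrightarrow> edist n x y > \<eta>)" for S \<theta>
      proof -
        have "S \<subseteq> K" using that by blast
        then show ?thesis using P that by blast
      qed
      have up: "packing_number n \<eta> (ecball n \<theta> eps \<inter> K) \<le> P" for \<theta>
        by (rule pack_upper[OF upP])
      have xz: "x \<noteq> z" using exz epos edist_self[of n x] by auto
      have xb: "x \<in> ecball n x eps" using x KR epos unfolding ecball_def by (auto simp: edist_self)
      have zb: "z \<in> ecball n x eps" using zK KR exz unfolding ecball_def by auto
      have pw: "\<forall>p\<in>{x, z}. \<forall>q\<in>{x, z}. p \<noteq> q \<longrightarrow> edist n p q > \<eta>"
        using exz etalt edist_sym[of n z x] by auto
      have "card {x, z} \<le> packing_number n \<eta> (ecball n x eps \<inter> K)"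
        proof (rule pack_lower[where P=P, OF upP[where \<theta>=x]])
        show "{x, z} \<subseteq> ecball n x eps \<inter> K" using xb zb x zK by blast
      qed (use pw in simp_all)
      then have two: "2 \<le> packing_number n \<eta> (ecball n x eps \<inter> K)" using xz by simp
      have bddM: "bdd_above ((\<lambda>\<theta>. real (packing_number n (eps / cstar) (ecball n \<theta> eps \<inter> K))) ` K)"
        using up \<eta>_def by (intro bdd_aboveI2[where M="real P"]) simp
      have "real (packing_number n (eps / cstar) (ecball n x eps \<inter> K)) \<le> Mloc n cstar K eps"
        unfolding Mloc_def using cSUP_upper[OF x bddM] .
      moreover have "(2::real) \<le> real (packing_number n (eps / cstar) (ecball n x eps \<inter> K))"
        using two unfolding \<eta>_def by simp
      ultimately have M2: "2 \<le> Mloc n cstar K eps" by linarith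
      have "ln 2 \<le> ln (Mloc n cstar K eps)" using M2 by simp
      moreover have "eps^2 / \<sigma>^2 \<le> 1/4"
      proof -
        have "eps \<le> \<sigma> / 2" unfolding eps_def m_def by simp
        then have "eps^2 \<le> (\<sigma>/2)^2" using epos by (simp add: power_mono)
        then show ?thesis using sig by (simp add: field_simps power_divide)
      qed
      ultimately have "eps^2 / \<sigma>^2 \<le> ln (Mloc n cstar K eps)" using ln2_ge by linarith
      then have "eps \<in> E" unfolding E_def using epos by simp
      then have "eps \<le> Sup E" using Ebdd by (rule cSup_upper)
      then show ?thesis using EE unfolding eps_def m_def by simp
    qed
qed

theorem mainTheorem14:
  shows "\<exists>C0. \<forall>cstar \<ge> C0. \<exists>c > 0. \<forall>(n::nat) (K::(nat \<Rightarrow> real) set) (\<sigma>::real).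
           K \<subseteq> Rn n \<and> K \<noteq> {} \<and> convex_Rn K \<and> closed_Rn n K \<and> bounded_Rn n K \<and> \<sigma> > 0
           \<longrightarrow> eps_star n cstar \<sigma> K \<ge> c * min \<sigma> (diam_Rn n K)"
  using main_aux by (intro exI[of _ 2] allI impI exI[of _ "1/2::real"] conjI) auto

end
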